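(* Let $k\ge 1$ and let $t_1\ge s_1\ge t_2\ge s_2\ge\cdots\ge t_k\ge s_k\ge 0=:t_{k+1}$ be integers. Let $\tilde A+\lambda\tilde E$ be a complex matrix pencil partitioned into $k$ block rows of sizes $s_1,\dots,s_k$ and $k$ block columns of sizes $t_1,\dots,t_k$, of the form \[ \tilde A+\lambda\tilde E=\begin{bmatrix} 0 & A_{1,2} & \cdots & A_{1,k}\\ & \ddots & \ddots & \vdots\\ & & \ddots & A_{k-1,k}\\ & & & 0\end{bmatrix}+\lambda\begin{bmatrix} E_{1,1} & E_{1,2} & \cdots & E_{1,k}\\ & \ddots & \ddots & \vdots\\ & & \ddots & E_{k-1,k}\\ & & & E_{k,k}\end{bmatrix}, \] where $A_{i,j},E_{i,j}\in\mathbb{C}^{s_i\times t_j}$, all blocks below the block diagonal (for both matrices) and the block-diagonal blocks of $\tilde A$ are zero, and the "stairs" have the special form \[ A_{i,i+1}=\begin{bmatrix}\hat A_{i,i+1}\\ 0\end{bmatrix},\qquad E_{i,i}=\begin{bmatrix}0 & \hat E_{i,i}\end{bmatrix}, \] with $\hat A_{i,i+1}\in\mathbb{C}^{t_{i+1}\times t_{i+1}}$ and $\hat E_{i,i}\in\mathbb{C}^{s_i\times s_i}$ upper triangular and invertible. Then there exist unit upper triangular (invertible) matrices $S$ and $T$ such that \[ S^{-1}(\tilde A+\lambda\tilde E)T=\begin{bmatrix}\lambda E_{1,1} & A_{1,2} & 0 & 0\\ & \ddots & \ddots & 0\\ & & \ddots & A_{k-1,k}\\ & & & \lambda E_{k,k}\end{bmatrix},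 \] i.e. all blocks other than the blocks $E_{i,i}$ (in the $\lambda$-coefficient) and $A_{i,i+1}$ (in the constant coefficient) are eliminated, while the blocks $E_{i,i}$ and $A_{i,i+1}$ themselves are left unaltered; so the transformed pencil is block bidiagonal.
   Context: A matrix is unit upper triangular if it is upper triangular with all diagonal entries equal to $1$. The block partition of the transformed pencil is the same as that of $\tilde A+\lambda\tilde E$. *)

theory Defs
  imports "Jordan_Normal_Form.Matrix"
begin

definition boff :: "(nat \<Rightarrow> nat) \<Rightarrow> nat \<Rightarrow> nat" where
  "boff sz i = (\<Sum>l<i. sz l)"

definition subblock :: "'a mat \<Rightarrow> nat \<Rightarrow> nat \<Rightarrow> nat \<Rightarrow> nat \<Rightarrow> 'a mat" where
  "subblock M r0 c0 nr nc = mat nr nc (\<lambda>(p, q). M $$ (r0 + p, c0 + q))"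

definition unit_upper_triangular :: "'a::{zero,one} mat \<Rightarrow> bool" where
  "unit_upper_triangular M \<longleftrightarrow> square_mat M \<and> upper_triangular M \<and>
     (\<forall>i < dim_row M. M $$ (i, i) = 1)"

end

theory Submission
  imports Defs "Jordan_Normal_Form.Determinant" "Jordan_Normal_Form.Column_Operations"
begin


lemma boff_Suc: "boff sz (Suc i) = boff sz i + sz i" by (simp add: boff_def)

lemma boff_mono: "i \<le> j \<Longrightarrow> boff sz i \<le> boff sz j"
  unfolding boff_def by (rule sum_mono2) auto

lemma boff_lt: "i < j \<Longrightarrow> p < sz i \<Longrightarrow> boff sz i + p < boff sz j + p'"
proof -
  assume "i < j" "p < sz i"
  then have "boff sz i + p < boff sz (Suc i)" by (simp add: boff_Suc)
  also have "\<dots> \<le> boff sz j" using \<open>i < j\<close> by (intro boff_mono) auto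
  finally show ?thesis by simp
qed

lemma boff_decomp: "r < boff sz k \<Longrightarrow> \<exists>i<k. \<exists>p<sz i. r = boff sz i + p"
proof (induction k)
  case 0 then show ?case by (simp add: boff_def)
next
  case (Suc k)
  show ?case
  proof (cases "r < boff sz k")
    case True then show ?thesis using Suc.IH by (meson less_SucI)
  next
    case False
    then have "r - boff sz k < sz k" "r = boff sz k + (r - boff sz k)" using Suc.prems by (auto simp: boff_Suc)
    then show ?thesis by blast
  qed
qed

lemma boff_less_iff: "p < sz i \<Longrightarrow> q < sz j \<Longrightarrow> boff sz i + p < boff sz j + q \<Longrightarrow> i < j \<or> (i = j \<and> p < q)"
  by (metis add_less_cancel_left boff_lt linorder_neqE_nat not_less_iff_gr_or_eq)

lemma boff_inj: "boff sz i + p = boff sz j + q \<Longrightarrow> p < sz i \<Longrightarrow> q < sz j \<Longrightarrow> i = j \<and> p = q"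
  by (metis add_left_cancel boff_lt less_irrefl linorder_neqE_nat)

lemma boff_in: "i < k \<Longrightarrow> p < sz i \<Longrightarrow> boff sz i + p < boff sz k"
  using boff_lt[of i k p sz 0] by simp

definition idxA :: "nat \<Rightarrow> nat \<Rightarrow> nat \<Rightarrow> nat \<Rightarrow> nat" where
  "idxA N M x y = (N - x) * (2 * M) + y"
definition idxE :: "nat \<Rightarrow> nat \<Rightarrow> nat \<Rightarrow> nat \<Rightarrow> nat" where
  "idxE N M x y = (N - x) * (2 * M) + M + y"

lemma lin_lt: "(a::nat) < b \<Longrightarrow> u < K \<Longrightarrow> a * K + u < b * K + v"
proof -
  assume "a < b" "u < K"
  have "a * K + u < (a + 1) * K" using \<open>u < K\<close> by simp
  also have "\<dots> \<le> b * K" using \<open>a < b\<close> by (intro mult_right_mono) auto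
  finally show ?thesis by simp
qed

lemma lin_eq: "(a::nat) * K + u = b * K + v \<Longrightarrow> u < K \<Longrightarrow> v < K \<Longrightarrow> a = b \<and> u = v"
proof -
  assume h: "a * K + u = b * K + v" "u < K" "v < K"
  have "a = b"
  proof (rule ccontr)
    assume "a \<noteq> b"
    then consider "a < b" | "b < a" by linarith
    then show False using lin_lt[of a b u K v] lin_lt[of b a v K u] h by (cases; auto)
  qed
  then show ?thesis using h by simp
qed

lemma idx_disj: "x < N \<Longrightarrow> y < M \<Longrightarrow> x' < N \<Longrightarrow> y' < M \<Longrightarrow> idxA N M x y \<noteq> idxE N M x' y'"
  unfolding idxA_def idxE_def using lin_eq[of "N - x" "2*M" y "N - x'" "M + y'"] by (auto simp: add.assoc)

lemma idx_row_lt: "x < x' \<Longrightarrow> x' < N \<Longrightarrow> y < M \<Longrightarrow> y' < M \<Longrightarrow>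
   idxA N M x' y' < idxA N M x y \<and> idxA N M x' y' < idxE N M x y \<and> idxE N M x' y' < idxA N M x y \<and> idxE N M x' y' < idxE N M x y"
  unfolding idxA_def idxE_def using lin_lt[of "N - x'" "N - x" y' "2*M"] lin_lt[of "N - x'" "N - x" "M + y'" "2*M"]
  by (auto simp: add.assoc)

lemma diag_nz: fixes X :: "complex mat" assumes "upper_triangular X" "invertible_mat X" "X \<in> carrier_mat n n" "p < n"
  shows "X $$ (p, p) \<noteq> 0"
proof -
  obtain Y where XY: "X * Y = 1\<^sub>m n" and YX: "Y * X = 1\<^sub>m (dim_row Y)"
    using assms unfolding invertible_mat_def inverts_mat_def by auto
  have Y: "Y \<in> carrier_mat n n"
  proof -
    have "dim_col Y = n" using XY by (metis index_mult_mat(3) index_one_mat(3))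
    moreover have "dim_row Y = n" using YX assms(3) by (metis carrier_matD(2) index_mult_mat(3) index_one_mat(3))
    ultimately show ?thesis by auto
  qed
  have "det X * det Y = 1" using det_mult[OF assms(3) Y] XY by simp
  then have "det X \<noteq> 0" by auto
  then have "prod_list (diag_mat X) \<noteq> 0" using det_upper_triangular[OF assms(1) assms(3)] by simp
  then show ?thesis using assms(3,4) by (auto simp: prod_list_zero_iff diag_mat_def)
qed


definition Inv :: "nat \<Rightarrow> (nat \<Rightarrow> nat) \<Rightarrow> (nat \<Rightarrow> nat) \<Rightarrow> complex mat \<Rightarrow> complex mat \<Rightarrow> nat
   \<Rightarrow> complex mat \<Rightarrow> complex mat \<Rightarrow> complex mat \<Rightarrow> bool" where
"Inv k s t A E m S Sinv T \<longleftrightarrow>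
  S \<in> carrier_mat (boff s k) (boff s k) \<and> Sinv \<in> carrier_mat (boff s k) (boff s k) \<and>
  T \<in> carrier_mat (boff t k) (boff t k) \<and>
  unit_upper_triangular S \<and> unit_upper_triangular T \<and>
  Sinv * S = 1\<^sub>m (boff s k) \<and> S * Sinv = 1\<^sub>m (boff s k) \<and>
  (\<forall>i<k. \<forall>j<k. \<forall>p<s i. \<forall>q<t j.
     (j \<le> i + 1 \<longrightarrow> (Sinv * A * T) $$ (boff s i + p, boff t j + q) = A $$ (boff s i + p, boff t j + q)) \<and>
     (i + 2 \<le> j \<longrightarrow> idxA (boff s k) (boff t k) (boff s i + p) (boff t j + q) < m \<longrightarrow>
         (Sinv * A * T) $$ (boff s i + p, boff t j + q) = 0) \<and>
     (j \<le> i \<longrightarrow> (Sinv * E * T) $$ (boff s i + p, boff t j + q) = E $$ (boff s i + p, boff t j + q)) \<and>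
     (i + 1 \<le> j \<longrightarrow> idxE (boff s k) (boff t k) (boff s i + p) (boff t j + q) < m \<longrightarrow>
         (Sinv * E * T) $$ (boff s i + p, boff t j + q) = 0))"

lemma idxA_inj: "idxA N M x y = idxA N M x' y' \<Longrightarrow> x < N \<Longrightarrow> x' < N \<Longrightarrow> y < M \<Longrightarrow> y' < M \<Longrightarrow> x = x' \<and> y = y'"
  unfolding idxA_def using lin_eq[of "N - x" "2*M" y "N - x'" y'] by auto

lemma idxE_inj: "idxE N M x y = idxE N M x' y' \<Longrightarrow> x < N \<Longrightarrow> x' < N \<Longrightarrow> y < M \<Longrightarrow> y' < M \<Longrightarrow> x = x' \<and> y = y'"
  unfolding idxE_def using lin_eq[of "N - x" "2*M" "M + y" "N - x'" "M + y'"] by (auto simp: add.assoc)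

lemma idxA_lt_idxE: "y < M \<Longrightarrow> idxA N M x y < idxE N M x y'"
  unfolding idxA_def idxE_def by simp

lemma idx_bound: "x < N \<Longrightarrow> y < M \<Longrightarrow> idxA N M x y < (N + 1) * (2 * M) \<and> idxE N M x y < (N + 1) * (2 * M)"
  unfolding idxA_def idxE_def using lin_lt[of "N - x" "N + 1" y "2*M" 0] lin_lt[of "N - x" "N + 1" "M + y" "2*M" 0]
  by (auto simp: add.assoc)

lemma unit_upper_one: "unit_upper_triangular (1\<^sub>m n)"
  unfolding unit_upper_triangular_def by auto

context
  fixes k :: nat and s t :: "nat \<Rightarrow> nat" and A E :: "complex mat"
  assumes ts: "\<forall>i<k. s i \<le> t i"
    and st: "\<forall>i. i + 1 < k \<longrightarrow> t (i + 1) \<le> s i"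
    and A_dim: "A \<in> carrier_mat (boff s k) (boff t k)"
    and E_dim: "E \<in> carrier_mat (boff s k) (boff t k)"
    and A_lower: "\<forall>i<k. \<forall>j<k. \<forall>p<s i. \<forall>q<t j. j \<le> i \<longrightarrow>
                    A $$ (boff s i + p, boff t j + q) = 0"
    and E_lower: "\<forall>i<k. \<forall>j<k. \<forall>p<s i. \<forall>q<t j. j < i \<longrightarrow>
                    E $$ (boff s i + p, boff t j + q) = 0"
    and A_stair_hat: "\<forall>i. i + 1 < k \<longrightarrow>
          upper_triangular (subblock A (boff s i) (boff t (i + 1)) (t (i + 1)) (t (i + 1))) \<and>
          invertible_mat (subblock A (boff s i) (boff t (i + 1)) (t (i + 1)) (t (i + 1)))"
    and E_stair_hat: "\<forall>i<k.
          upper_triangular (subblock E (boff s i) (boff t i + (t i - s i)) (s i) (s i)) \<and>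
          invertible_mat (subblock E (boff s i) (boff t i + (t i - s i)) (s i) (s i))"
begin

lemma Ahat_upper: "i + 1 < k \<Longrightarrow> q' < q \<Longrightarrow> q < t (i + 1) \<Longrightarrow>
   A $$ (boff s i + q, boff t (i + 1) + q') = 0"
  using A_stair_hat upper_triangularD[of "subblock A (boff s i) (boff t (i + 1)) (t (i + 1)) (t (i + 1))" q' q]
  by (auto simp: subblock_def)

lemma Ahat_diag: "i + 1 < k \<Longrightarrow> q < t (i + 1) \<Longrightarrow>
   A $$ (boff s i + q, boff t (i + 1) + q) \<noteq> 0"
  using A_stair_hat diag_nz[of "subblock A (boff s i) (boff t (i + 1)) (t (i + 1)) (t (i + 1))" "t (i+1)" q]
  by (auto simp: subblock_def)

lemma Ehat_upper: "i < k \<Longrightarrow> p < p' \<Longrightarrow> p' < s i \<Longrightarrow>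
   E $$ (boff s i + p', boff t i + (t i - s i) + p) = 0"
  using E_stair_hat upper_triangularD[of "subblock E (boff s i) (boff t i + (t i - s i)) (s i) (s i)" p p']
  by (auto simp: subblock_def)

lemma Ehat_diag: "i < k \<Longrightarrow> p < s i \<Longrightarrow>
   E $$ (boff s i + p, boff t i + (t i - s i) + p) \<noteq> 0"
  using E_stair_hat diag_nz[of "subblock E (boff s i) (boff t i + (t i - s i)) (s i) (s i)" "s i" p]
  by (auto simp: subblock_def)

lemma InvD:
  assumes "Inv k s t A E m S Sinv T" "i < k" "j < k" "p < s i" "q < t j"
  shows "j \<le> i + 1 \<Longrightarrow> (Sinv * A * T) $$ (boff s i + p, boff t j + q) = A $$ (boff s i + p, boff t j + q)"
    "i + 2 \<le> j \<Longrightarrow> idxA (boff s k) (boff t k) (boff s i + p) (boff t j + q) < m \<Longrightarrow>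
         (Sinv * A * T) $$ (boff s i + p, boff t j + q) = 0"
    "j \<le> i \<Longrightarrow> (Sinv * E * T) $$ (boff s i + p, boff t j + q) = E $$ (boff s i + p, boff t j + q)"
    "i + 1 \<le> j \<Longrightarrow> idxE (boff s k) (boff t k) (boff s i + p) (boff t j + q) < m \<Longrightarrow>
         (Sinv * E * T) $$ (boff s i + p, boff t j + q) = 0"
  using assms unfolding Inv_def by blast+

lemma rowop:
  assumes inv: "Inv k s t A E m S Sinv T"
    and ij: "i < k" "j < k" "p < s i" "q < t j" "i + 2 \<le> j"
    and m: "m = idxA (boff s k) (boff t k) (boff s i + p) (boff t j + q)"
  shows "\<exists>S' Sinv' T'. Inv k s t A E (Suc m) S' Sinv' T'"
proof -
  define N where "N = boff s k"
  define M where "M = boff t k"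
  define r where "r = boff s i + p"
  define c where "c = boff t j + q"
  define rho where "rho = boff s (j - 1) + q"
  define A' where "A' = Sinv * A * T"
  define E' where "E' = Sinv * E * T"
  have jj: "j - 1 + 1 = j" "j - 1 < k" using ij by auto
  have qs: "q < s (j - 1)" using st[rule_format, of "j-1"] jj ij by auto
  have rN: "r < N" unfolding r_def N_def using boff_in ij by blast
  have cM: "c < M" unfolding c_def M_def using boff_in ij by blast
  have rhoN: "rho < N" unfolding rho_def N_def using boff_in jj qs by blast
  have r_rho: "r < rho" using boff_lt[of i "j-1" p s q] ij unfolding r_def rho_def by auto
  have S: "S \<in> carrier_mat N N" and Sinv: "Sinv \<in> carrier_mat N N" and T: "T \<in> carrier_mat M M"
    and uS: "unit_upper_triangular S" and uT: "unit_upper_triangular T"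
    and SS: "Sinv * S = 1\<^sub>m N" "S * Sinv = 1\<^sub>m N"
    using inv unfolding Inv_def N_def M_def by auto
  have A'c: "A' \<in> carrier_mat N M" unfolding A'_def using S Sinv T A_dim N_def M_def by auto
  have E'c: "E' \<in> carrier_mat N M" unfolding E'_def using S Sinv T E_dim N_def M_def by auto
  have piv: "A' $$ (rho, c) = A $$ (rho, c)"
    using InvD(1)[OF inv jj(2) ij(2) qs ij(4)] jj unfolding A'_def rho_def c_def by auto
  have pivnz: "A $$ (rho, c) \<noteq> 0"
    using Ahat_diag[of "j - 1" q] jj ij unfolding rho_def c_def by auto
  define \<beta> where "\<beta> = - A' $$ (r, c) / A' $$ (rho, c)"
  define P where "P = addrow_mat N \<beta> r rho"
  define Q where "Q = addrow_mat N (- \<beta>) r rho"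
  have Pc: "P \<in> carrier_mat N N" and Qc: "Q \<in> carrier_mat N N" unfolding P_def Q_def by auto
  have PQ: "P * Q = 1\<^sub>m N" unfolding P_def Q_def
    using addrow_mat_inv[of r N rho \<beta>] rN rhoN r_rho by auto
  have QP: "Q * P = 1\<^sub>m N" unfolding P_def Q_def
    using addrow_mat_inv[of r N rho "- \<beta>"] rN rhoN r_rho by auto
  have A'': "P * Sinv * A * T = addrow \<beta> r rho A'"
  proof -
    have "P * Sinv * A * T = (P * (Sinv * A)) * T"
      using Pc Sinv A_dim N_def M_def by (simp add: assoc_mult_mat[of _ N N _ N _ M])
    also have "\<dots> = P * A'"
      unfolding A'_def using Pc Sinv A_dim T N_def M_def by (simp add: assoc_mult_mat[of _ N N _ M _ M])
    also have "\<dots> = addrow \<beta> r rho A'" unfolding P_def by (rule addrow_mat[symmetric, OF A'c rhoN])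
    finally show ?thesis .
  qed
  have E'': "P * Sinv * E * T = addrow \<beta> r rho E'"
  proof -
    have "P * Sinv * E * T = (P * (Sinv * E)) * T"
      using Pc Sinv E_dim N_def M_def by (simp add: assoc_mult_mat[of _ N N _ N _ M])
    also have "\<dots> = P * E'"
      unfolding E'_def using Pc Sinv E_dim T N_def M_def by (simp add: assoc_mult_mat[of _ N N _ M _ M])
    also have "\<dots> = addrow \<beta> r rho E'" unfolding P_def by (rule addrow_mat[symmetric, OF E'c rhoN])
    finally show ?thesis .
  qed
  have S': "S * Q = addcol (- \<beta>) rho r S" unfolding Q_def by (rule addcol_mat[symmetric, OF S rN])
  have uS': "unit_upper_triangular (S * Q)"
  proof -
    have "upper_triangular S" "\<forall>x<N. S $$ (x, x) = 1" using uS S unfolding unit_upper_triangular_def by auto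
    then show ?thesis unfolding S' unit_upper_triangular_def using S r_rho rhoN
      by (auto simp: upper_triangular_def)
  qed
  have inv1: "(P * Sinv) * (S * Q) = 1\<^sub>m N"
  proof -
    have "(P * Sinv) * (S * Q) = P * ((Sinv * S) * Q)" using Pc Sinv S Qc
      by (simp add: assoc_mult_mat[of _ N N _ N _ N])
    then show ?thesis using SS PQ Qc by simp
  qed
  have inv2: "(S * Q) * (P * Sinv) = 1\<^sub>m N"
  proof -
    have "(S * Q) * (P * Sinv) = S * ((Q * P) * Sinv)" using Pc Sinv S Qc
      by (simp add: assoc_mult_mat[of _ N N _ N _ N])
    then show ?thesis using SS QP Sinv by simp
  qed
  have F1: "A' $$ (rho, boff t j' + q') = 0" if "j' < k" "q' < t j'" "j' \<le> j - 1 \<or> (j' = j \<and> q' < q)" for j' q'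
  proof -
    have "A' $$ (rho, boff t j' + q') = A $$ (rho, boff t j' + q')"
      using InvD(1)[OF inv jj(2) that(1) qs that(2)] that(3) jj unfolding A'_def rho_def by auto
    also have "\<dots> = 0"
      using that A_lower jj qs Ahat_upper[of "j - 1" q' q] ij unfolding rho_def by auto
    finally show ?thesis .
  qed
  have F2: "E' $$ (rho, boff t j' + q') = 0" if "j' < k" "q' < t j'" "j' < j - 1" for j' q'
  proof -
    have "E' $$ (rho, boff t j' + q') = E $$ (rho, boff t j' + q')"
      using InvD(3)[OF inv jj(2) that(1) qs that(2)] that(3) unfolding E'_def rho_def by auto
    also have "\<dots> = 0"
      using that E_lower jj qs unfolding rho_def by auto
    finally show ?thesis .
  qed
  have Arc: "addrow \<beta> r rho A' $$ (r, c) = 0"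
    using A'c rN cM piv pivnz unfolding \<beta>_def by (auto simp: field_simps)
  show ?thesis
  proof (intro exI)
    show "Inv k s t A E (Suc m) (S * Q) (P * Sinv) T"
      unfolding Inv_def
    proof (intro conjI allI impI)
      fix i' j' p' q'
      assume h: "i' < k" "j' < k" "p' < s i'" "q' < t j'"
      define x where "x = boff s i' + p'"
      define y where "y = boff t j' + q'"
      have xN: "x < N" unfolding x_def N_def using boff_in h by blast
      have yM: "y < M" unfolding y_def M_def using boff_in h by blast
      have Aent: "(P * Sinv * A * T) $$ (x, y) = (if r = x then \<beta> * A' $$ (rho, y) + A' $$ (x, y) else A' $$ (x, y))"
        unfolding A'' using A'c xN yM by simp
      have Eent: "(P * Sinv * E * T) $$ (x, y) = (if r = x then \<beta> * E' $$ (rho, y) + E' $$ (x, y) else E' $$ (x, y))"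
        unfolding E'' using E'c xN yM by simp
      have xr: "x = r \<Longrightarrow> i' = i \<and> p' = p" using boff_inj[of s i' p' i p] h ij unfolding x_def r_def by auto
      show "j' \<le> i' + 1 \<Longrightarrow> (P * Sinv * A * T) $$ (boff s i' + p', boff t j' + q') = A $$ (boff s i' + p', boff t j' + q')"
      proof -
        assume "j' \<le> i' + 1"
        moreover have "x = r \<Longrightarrow> j' \<le> i' + 1 \<Longrightarrow> j' \<le> j - 1" using xr ij by auto
        ultimately show ?thesis
          using Aent xr F1[OF h(2,4)] InvD(1)[OF inv h] ij unfolding x_def y_def A'_def by (cases "x = r") auto
      qed
      show "j' \<le> i' \<Longrightarrow> (P * Sinv * E * T) $$ (boff s i' + p', boff t j' + q') = E $$ (boff s i' + p', boff t j' + q')"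
      proof -
        assume "j' \<le> i'"
        moreover have "x = r \<Longrightarrow> j' \<le> i' \<Longrightarrow> j' < j - 1" using xr ij by auto
        ultimately show ?thesis
          using Eent xr F2[OF h(2,4)] InvD(3)[OF inv h] ij unfolding x_def y_def E'_def by (cases "x = r") auto
      qed
      show "(P * Sinv * E * T) $$ (boff s i' + p', boff t j' + q') = 0"
        if "i' + 1 \<le> j'" "idxE (boff s k) (boff t k) (boff s i' + p') (boff t j' + q') < Suc m"
      proof -
        have ne: "idxE N M x y \<noteq> m" using idx_disj[OF rN cM xN yM] m unfolding N_def M_def r_def c_def by metis
        then have lt: "idxE N M x y < m" using that unfolding x_def y_def N_def M_def by simp
        have "x \<noteq> r"
        proof
          assume "x = r"
          then have "m < idxE N M x y" using m idxA_lt_idxE[OF cM, of N r y] unfolding N_def M_def r_def c_def by simp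
          then show False using lt by simp
        qed
        then show ?thesis using Eent InvD(4)[OF inv h that(1)] lt
          unfolding x_def y_def E'_def N_def M_def by auto
      qed
      show "(P * Sinv * A * T) $$ (boff s i' + p', boff t j' + q') = 0"
        if "i' + 2 \<le> j'" "idxA (boff s k) (boff t k) (boff s i' + p') (boff t j' + q') < Suc m"
      proof (cases "x = r")
        case False
        have "idxA N M x y \<noteq> m" using idxA_inj[of N M x y r c] False xN yM rN cM m
          unfolding N_def M_def r_def c_def by metis
        then have lt: "idxA N M x y < m" using that unfolding x_def y_def N_def M_def by simp
        then show ?thesis using Aent InvD(2)[OF inv h that(1)] False
          unfolding x_def y_def A'_def N_def M_def by auto
      next
        case True
        show ?thesis
        proof (cases "y = c")
          case True
          then show ?thesis using Arc \<open>x = r\<close> unfolding A'' x_def y_def by simp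
        next
          case False
          have "idxA N M x y \<noteq> m" using idxA_inj[of N M x y r c] False xN yM rN cM m
            unfolding N_def M_def r_def c_def by metis
          then have lt: "idxA N M x y < m" using that unfolding x_def y_def N_def M_def by simp
          then have "y < c" using \<open>x = r\<close> m unfolding idxA_def r_def c_def N_def M_def by simp
          then have "j' < j \<or> (j' = j \<and> q' < q)" using boff_less_iff[of q' t j' q j] h ij unfolding y_def c_def by auto
          then have "A' $$ (rho, y) = 0" using F1[OF h(2,4)] unfolding y_def by auto
          then show ?thesis using Aent \<open>x = r\<close> InvD(2)[OF inv h that(1)] lt
            unfolding x_def y_def A'_def N_def M_def by auto
        qed
      qed
    qed (use S Sinv T uT uS' inv1 inv2 Pc Qc in \<open>auto simp: N_def M_def\<close>)
  qed
qed

lemma colop: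
  assumes inv: "Inv k s t A E m S Sinv T"
    and ij: "i < k" "j < k" "p < s i" "q < t j" "i + 1 \<le> j"
    and m: "m = idxE (boff s k) (boff t k) (boff s i + p) (boff t j + q)"
  shows "\<exists>S' Sinv' T'. Inv k s t A E (Suc m) S' Sinv' T'"
proof -
  define N where "N = boff s k"
  define M where "M = boff t k"
  define r where "r = boff s i + p"
  define c where "c = boff t j + q"
  define qq where "qq = t i - s i + p"
  define c0 where "c0 = boff t i + qq"
  define A' where "A' = Sinv * A * T"
  define E' where "E' = Sinv * E * T"
  have qqt: "qq < t i" using ts ij unfolding qq_def by fastforce
  have rN: "r < N" unfolding r_def N_def using boff_in ij by blast
  have cM: "c < M" unfolding c_def M_def using boff_in ij by blast
  have c0M: "c0 < M" unfolding c0_def M_def using boff_in ij qqt by blast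
  have c0c: "c0 < c" using boff_lt[of i j qq t q] ij qqt unfolding c0_def c_def by auto
  have S: "S \<in> carrier_mat N N" and Sinv: "Sinv \<in> carrier_mat N N" and T: "T \<in> carrier_mat M M"
    and uS: "unit_upper_triangular S" and uT: "unit_upper_triangular T"
    and SS: "Sinv * S = 1\<^sub>m N" "S * Sinv = 1\<^sub>m N"
    using inv unfolding Inv_def N_def M_def by auto
  have A'c: "A' \<in> carrier_mat N M" unfolding A'_def using S Sinv T A_dim N_def M_def by auto
  have E'c: "E' \<in> carrier_mat N M" unfolding E'_def using S Sinv T E_dim N_def M_def by auto
  have piv: "E' $$ (r, c0) = E $$ (r, c0)"
    using InvD(3)[OF inv ij(1) ij(1) ij(3) qqt] unfolding E'_def r_def c0_def by auto
  have pivnz: "E $$ (r, c0) \<noteq> 0"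
    using Ehat_diag[of i p] ij unfolding r_def c0_def qq_def by (simp add: add.assoc)
  define \<alpha> where "\<alpha> = - E' $$ (r, c) / E' $$ (r, c0)"
  define Q where "Q = addrow_mat M \<alpha> c0 c"
  have Qc: "Q \<in> carrier_mat M M" unfolding Q_def by auto
  have A'': "Sinv * A * (T * Q) = addcol \<alpha> c c0 A'"
  proof -
    have "Sinv * A * (T * Q) = A' * Q"
      unfolding A'_def using Qc Sinv A_dim T N_def M_def
      by (intro assoc_mult_mat[of "Sinv * A" N M T M Q M, symmetric]) auto
    also have "\<dots> = addcol \<alpha> c c0 A'" unfolding Q_def by (rule addcol_mat[symmetric, OF A'c c0M])
    finally show ?thesis .
  qed
  have E'': "Sinv * E * (T * Q) = addcol \<alpha> c c0 E'"
  proof -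
    have "Sinv * E * (T * Q) = E' * Q"
      unfolding E'_def using Qc Sinv E_dim T N_def M_def
      by (intro assoc_mult_mat[of "Sinv * E" N M T M Q M, symmetric]) auto
    also have "\<dots> = addcol \<alpha> c c0 E'" unfolding Q_def by (rule addcol_mat[symmetric, OF E'c c0M])
    finally show ?thesis .
  qed
  have T': "T * Q = addcol \<alpha> c c0 T" unfolding Q_def by (rule addcol_mat[symmetric, OF T c0M])
  have uT': "unit_upper_triangular (T * Q)"
  proof -
    have "upper_triangular T" "\<forall>x<M. T $$ (x, x) = 1" using uT T unfolding unit_upper_triangular_def by auto
    then show ?thesis unfolding T' unit_upper_triangular_def using T c0c cM
      by (auto simp: upper_triangular_def)
  qed
  have G1: "A' $$ (boff s i' + p', c0) = 0" if "i' < k" "p' < s i'" "i \<le> i'" for i' p'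
  proof -
    have "A' $$ (boff s i' + p', c0) = A $$ (boff s i' + p', c0)"
      using InvD(1)[OF inv that(1) ij(1) that(2) qqt] that(3) unfolding A'_def c0_def by auto
    also have "\<dots> = 0"
      using that A_lower ij qqt unfolding c0_def by auto
    finally show ?thesis .
  qed
  have G2: "E' $$ (boff s i' + p', c0) = 0" if "i' < k" "p' < s i'" "i < i' \<or> (i' = i \<and> p < p')" for i' p'
  proof -
    have "E' $$ (boff s i' + p', c0) = E $$ (boff s i' + p', c0)"
      using InvD(3)[OF inv that(1) ij(1) that(2) qqt] that(3) unfolding E'_def c0_def by auto
    also have "\<dots> = 0"
    proof (cases "i < i'")
      case True
      then show ?thesis using that E_lower ij qqt unfolding c0_def by auto
    next
      case False
      then show ?thesis using that Ehat_upper[of i p p'] ij unfolding c0_def qq_def by (simp add: add.assoc)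
    qed
    finally show ?thesis .
  qed
  have Erc: "addcol \<alpha> c c0 E' $$ (r, c) = 0"
    using E'c rN cM piv pivnz unfolding \<alpha>_def by (auto simp: field_simps)
  show ?thesis
  proof (intro exI)
    show "Inv k s t A E (Suc m) S Sinv (T * Q)"
      unfolding Inv_def
    proof (intro conjI allI impI)
      fix i' j' p' q'
      assume h: "i' < k" "j' < k" "p' < s i'" "q' < t j'"
      define x where "x = boff s i' + p'"
      define y where "y = boff t j' + q'"
      have xN: "x < N" unfolding x_def N_def using boff_in h by blast
      have yM: "y < M" unfolding y_def M_def using boff_in h by blast
      have Aent: "(Sinv * A * (T * Q)) $$ (x, y) = (if c = y then \<alpha> * A' $$ (x, c0) + A' $$ (x, y) else A' $$ (x, y))"
        unfolding A'' using A'c xN yM by simp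
      have Eent: "(Sinv * E * (T * Q)) $$ (x, y) = (if c = y then \<alpha> * E' $$ (x, c0) + E' $$ (x, y) else E' $$ (x, y))"
        unfolding E'' using E'c xN yM by simp
      have yc: "y = c \<Longrightarrow> j' = j \<and> q' = q" using boff_inj[of t j' q' j q] h ij unfolding y_def c_def by auto
      show "j' \<le> i' + 1 \<Longrightarrow> (Sinv * A * (T * Q)) $$ (boff s i' + p', boff t j' + q') = A $$ (boff s i' + p', boff t j' + q')"
      proof -
        assume "j' \<le> i' + 1"
        moreover have "y = c \<Longrightarrow> j' \<le> i' + 1 \<Longrightarrow> i \<le> i'" using yc ij by auto
        ultimately show ?thesis
          using Aent yc G1[OF h(1,3)] InvD(1)[OF inv h] ij unfolding x_def y_def A'_def by (cases "y = c") auto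
      qed
      show "j' \<le> i' \<Longrightarrow> (Sinv * E * (T * Q)) $$ (boff s i' + p', boff t j' + q') = E $$ (boff s i' + p', boff t j' + q')"
      proof -
        assume "j' \<le> i'"
        moreover have "y = c \<Longrightarrow> j' \<le> i' \<Longrightarrow> i < i'" using yc ij by auto
        ultimately show ?thesis
          using Eent yc G2[OF h(1,3)] InvD(3)[OF inv h] ij unfolding x_def y_def E'_def by (cases "y = c") auto
      qed
      show "(Sinv * A * (T * Q)) $$ (boff s i' + p', boff t j' + q') = 0"
        if "i' + 2 \<le> j'" "idxA (boff s k) (boff t k) (boff s i' + p') (boff t j' + q') < Suc m"
      proof -
        have ne: "idxA N M x y \<noteq> m" using idx_disj[OF xN yM rN cM] m unfolding N_def M_def r_def c_def by metis
        then have lt: "idxA N M x y < m" using that unfolding x_def y_def N_def M_def by simp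
        have "A' $$ (x, c0) = 0" if "y = c"
        proof (cases "i \<le> i'")
          case True
          then show ?thesis using G1[OF h(1,3)] unfolding x_def by auto
        next
          case False
          then have "x < r" using boff_lt[of i' i p' s p] h unfolding x_def r_def by auto
          then have "m < idxA N M x y" using idx_row_lt[OF _ rN cM yM] m that unfolding N_def M_def r_def c_def by auto
          then show ?thesis using lt by simp
        qed
        then show ?thesis using Aent InvD(2)[OF inv h \<open>i' + 2 \<le> j'\<close>] lt
          unfolding x_def y_def A'_def N_def M_def by auto
      qed
      show "(Sinv * E * (T * Q)) $$ (boff s i' + p', boff t j' + q') = 0"
        if "i' + 1 \<le> j'" "idxE (boff s k) (boff t k) (boff s i' + p') (boff t j' + q') < Suc m"
      proof (cases "x = r \<and> y = c")
        case True
        then show ?thesis using Erc unfolding E'' x_def y_def by simp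
      next
        case False
        have "idxE N M x y \<noteq> m" using idxE_inj[of N M x y r c] False xN yM rN cM m
          unfolding N_def M_def r_def c_def by metis
        then have lt: "idxE N M x y < m" using that unfolding x_def y_def N_def M_def by simp
        have "E' $$ (x, c0) = 0" if "y = c"
        proof -
          have xr: "x \<noteq> r" using False that by auto
          show ?thesis
          proof (cases "x < r")
            case True
            then have "m < idxE N M x y" using idx_row_lt[OF _ rN cM yM] m that unfolding N_def M_def r_def c_def by auto
            then show ?thesis using lt by simp
          next
            case False
            then have "r < x" using xr by auto
            then have "i < i' \<or> (i = i' \<and> p < p')" using boff_less_iff[of p s i p' i'] h ij unfolding x_def r_def by auto
            then show ?thesis using G2[OF h(1,3)] unfolding x_def by auto
          qed
        qed
        then show ?thesis using Eent InvD(4)[OF inv h \<open>i' + 1 \<le> j'\<close>] lt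
          unfolding x_def y_def E'_def N_def M_def by auto
      qed
    qed (use S Sinv T uT' uS SS Qc in \<open>auto simp: N_def M_def\<close>)
  qed
qed

lemma step:
  assumes inv: "Inv k s t A E m S Sinv T"
  shows "\<exists>S' Sinv' T'. Inv k s t A E (Suc m) S' Sinv' T'"
proof (cases "\<exists>i j p q. i < k \<and> j < k \<and> p < s i \<and> q < t j \<and> i + 2 \<le> j \<and>
           m = idxA (boff s k) (boff t k) (boff s i + p) (boff t j + q)")
  case True
  then show ?thesis using rowop[OF inv] by blast
next
  case noA: False
  show ?thesis
  proof (cases "\<exists>i j p q. i < k \<and> j < k \<and> p < s i \<and> q < t j \<and> i + 1 \<le> j \<and>
           m = idxE (boff s k) (boff t k) (boff s i + p) (boff t j + q)")
    case True
    then show ?thesis using colop[OF inv] by blast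
  next
    case noE: False
    have "Inv k s t A E (Suc m) S Sinv T"
      unfolding Inv_def
    proof (intro conjI allI impI)
      fix i j p q
      assume h: "i < k" "j < k" "p < s i" "q < t j"
      show "j \<le> i + 1 \<Longrightarrow> (Sinv * A * T) $$ (boff s i + p, boff t j + q) = A $$ (boff s i + p, boff t j + q)"
        using InvD(1)[OF inv h] .
      show "j \<le> i \<Longrightarrow> (Sinv * E * T) $$ (boff s i + p, boff t j + q) = E $$ (boff s i + p, boff t j + q)"
        using InvD(3)[OF inv h] .
      show "(Sinv * A * T) $$ (boff s i + p, boff t j + q) = 0"
        if "i + 2 \<le> j" "idxA (boff s k) (boff t k) (boff s i + p) (boff t j + q) < Suc m"
        using InvD(2)[OF inv h that(1)] that noA h less_Suc_eq by blast
      show "(Sinv * E * T) $$ (boff s i + p, boff t j + q) = 0"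
        if "i + 1 \<le> j" "idxE (boff s k) (boff t k) (boff s i + p) (boff t j + q) < Suc m"
        using InvD(4)[OF inv h that(1)] that noE h less_Suc_eq by blast
    qed (use inv in \<open>auto simp: Inv_def\<close>)
    then show ?thesis by blast
  qed
qed

lemma all_inv: "\<exists>S Sinv T. Inv k s t A E m S Sinv T"
proof (induction m)
  case 0
  have "Inv k s t A E 0 (1\<^sub>m (boff s k)) (1\<^sub>m (boff s k)) (1\<^sub>m (boff t k))"
    unfolding Inv_def using A_dim E_dim by (auto simp: unit_upper_one idxA_def idxE_def)
  then show ?case by blast
next
  case (Suc m)
  then show ?case using step by blast
qed

lemma final:
  shows "\<exists>S Sinv T. S \<in> carrier_mat (boff s k) (boff s k) \<and>
           T \<in> carrier_mat (boff t k) (boff t k) \<and>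
           unit_upper_triangular S \<and> unit_upper_triangular T \<and>
           Sinv \<in> carrier_mat (boff s k) (boff s k) \<and>
           Sinv * S = 1\<^sub>m (boff s k) \<and> S * Sinv = 1\<^sub>m (boff s k) \<and>
           (\<forall>lam::complex. \<forall>i<k. \<forall>j<k. \<forall>p<s i. \<forall>q<t j.
              (Sinv * (A + lam \<cdot>\<^sub>m E) * T) $$ (boff s i + p, boff t j + q) =
                (if j = i + 1 then A $$ (boff s i + p, boff t j + q) else 0)
                + lam * (if j = i then E $$ (boff s i + p, boff t j + q) else 0))"
proof -
  define N where "N = boff s k"
  define M where "M = boff t k"
  obtain S Sinv T where inv: "Inv k s t A E ((N + 1) * (2 * M)) S Sinv T" using all_inv by blast
  have S: "S \<in> carrier_mat N N" and Sinv: "Sinv \<in> carrier_mat N N" and T: "T \<in> carrier_mat M M"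
    using inv unfolding Inv_def N_def M_def by auto
  have Ac: "A \<in> carrier_mat N M" and Ec: "E \<in> carrier_mat N M" using A_dim E_dim N_def M_def by auto
  have key: "(Sinv * (A + lam \<cdot>\<^sub>m E) * T) $$ (boff s i + p, boff t j + q) =
                (if j = i + 1 then A $$ (boff s i + p, boff t j + q) else 0)
                + lam * (if j = i then E $$ (boff s i + p, boff t j + q) else 0)"
    if h: "i < k" "j < k" "p < s i" "q < t j" for lam i j p q
  proof -
    define x where "x = boff s i + p"
    define y where "y = boff t j + q"
    have xN: "x < N" unfolding x_def N_def using boff_in h by blast
    have yM: "y < M" unfolding y_def M_def using boff_in h by blast
    have "Sinv * (A + lam \<cdot>\<^sub>m E) * T = (Sinv * A + lam \<cdot>\<^sub>m (Sinv * E)) * T"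
      using Sinv Ac Ec by (simp add: mult_add_distrib_mat[of _ N N] mult_smult_distrib[of _ N N])
    also have "\<dots> = Sinv * A * T + lam \<cdot>\<^sub>m (Sinv * E * T)"
      using Sinv Ac Ec T by (simp add: add_mult_distrib_mat[of _ N M] mult_smult_assoc_mat[of _ N M])
    finally have eq: "Sinv * (A + lam \<cdot>\<^sub>m E) * T = Sinv * A * T + lam \<cdot>\<^sub>m (Sinv * E * T)" .
    have ent: "(Sinv * (A + lam \<cdot>\<^sub>m E) * T) $$ (x, y) = (Sinv * A * T) $$ (x, y) + lam * (Sinv * E * T) $$ (x, y)"
      unfolding eq using Sinv Ac Ec T xN yM by simp
    have bd: "idxA N M x y < (N + 1) * (2 * M)" "idxE N M x y < (N + 1) * (2 * M)"
      using idx_bound[OF xN yM] by auto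
    have a1: "j \<le> i + 1 \<Longrightarrow> (Sinv * A * T) $$ (x, y) = A $$ (x, y)"
      using InvD(1)[OF inv h] unfolding x_def y_def by auto
    have a2: "i + 2 \<le> j \<Longrightarrow> (Sinv * A * T) $$ (x, y) = 0"
      using InvD(2)[OF inv h] bd unfolding x_def y_def N_def M_def by auto
    have e1: "j \<le> i \<Longrightarrow> (Sinv * E * T) $$ (x, y) = E $$ (x, y)"
      using InvD(3)[OF inv h] unfolding x_def y_def by auto
    have e2: "i + 1 \<le> j \<Longrightarrow> (Sinv * E * T) $$ (x, y) = 0"
      using InvD(4)[OF inv h] bd unfolding x_def y_def N_def M_def by auto
    have al: "j \<le> i \<Longrightarrow> A $$ (x, y) = 0" using A_lower h unfolding x_def y_def by auto
    have el: "j < i \<Longrightarrow> E $$ (x, y) = 0" using E_lower h unfolding x_def y_def by auto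
    have "(Sinv * (A + lam \<cdot>\<^sub>m E) * T) $$ (x, y) =
          (if j = i + 1 then A $$ (x, y) else 0) + lam * (if j = i then E $$ (x, y) else 0)"
    proof -
      consider "j < i" | "j = i" | "j = i + 1" | "i + 2 \<le> j" by linarith
      then show ?thesis
      proof cases
        case 1 then show ?thesis using ent a1 e1 al el by simp
      next
        case 2 then show ?thesis using ent a1 e1 al by simp
      next
        case 3 then show ?thesis using ent a1 e2 by simp
      next
        case 4 then show ?thesis using ent a2 e2 by simp
      qed
    qed
    then show ?thesis unfolding x_def y_def .
  qed
  show ?thesis
    by (rule exI[of _ S], rule exI[of _ Sinv], rule exI[of _ T])
       (use inv key in \<open>auto simp: Inv_def\<close>)
qed

end

theorem lemma4p1:
  fixes k :: nat and s t :: "nat \<Rightarrow> nat" and A E :: "complex mat"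
  assumes k: "k \<ge> 1"
    and ts: "\<forall>i<k. s i \<le> t i"
    and st: "\<forall>i. i + 1 < k \<longrightarrow> t (i + 1) \<le> s i"
    and A_dim: "A \<in> carrier_mat (boff s k) (boff t k)"
    and E_dim: "E \<in> carrier_mat (boff s k) (boff t k)"
    and A_lower: "\<forall>i<k. \<forall>j<k. \<forall>p<s i. \<forall>q<t j. j \<le> i \<longrightarrow>
                    A $$ (boff s i + p, boff t j + q) = 0"
    and E_lower: "\<forall>i<k. \<forall>j<k. \<forall>p<s i. \<forall>q<t j. j < i \<longrightarrow>
                    E $$ (boff s i + p, boff t j + q) = 0"
    and A_stair_zero: "\<forall>i. i + 1 < k \<longrightarrow> (\<forall>p<s i. \<forall>q<t (i + 1). t (i + 1) \<le> p \<longrightarrow>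
                    A $$ (boff s i + p, boff t (i + 1) + q) = 0)"
    and A_stair_hat: "\<forall>i. i + 1 < k \<longrightarrow>
          upper_triangular (subblock A (boff s i) (boff t (i + 1)) (t (i + 1)) (t (i + 1))) \<and>
          invertible_mat (subblock A (boff s i) (boff t (i + 1)) (t (i + 1)) (t (i + 1)))"
    and E_stair_zero: "\<forall>i<k. \<forall>p<s i. \<forall>q<t i - s i. E $$ (boff s i + p, boff t i + q) = 0"
    and E_stair_hat: "\<forall>i<k.
          upper_triangular (subblock E (boff s i) (boff t i + (t i - s i)) (s i) (s i)) \<and>
          invertible_mat (subblock E (boff s i) (boff t i + (t i - s i)) (s i) (s i))"
  shows "\<exists>S Sinv T. S \<in> carrier_mat (boff s k) (boff s k) \<and>
           T \<in> carrier_mat (boff t k) (boff t k) \<and>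
           unit_upper_triangular S \<and> unit_upper_triangular T \<and>
           Sinv \<in> carrier_mat (boff s k) (boff s k) \<and>
           Sinv * S = 1\<^sub>m (boff s k) \<and> S * Sinv = 1\<^sub>m (boff s k) \<and>
           (\<forall>lam::complex. \<forall>i<k. \<forall>j<k. \<forall>p<s i. \<forall>q<t j.
              (Sinv * (A + lam \<cdot>\<^sub>m E) * T) $$ (boff s i + p, boff t j + q) =
                (if j = i + 1 then A $$ (boff s i + p, boff t j + q) else 0)
                + lam * (if j = i then E $$ (boff s i + p, boff t j + q) else 0))"
    using final[OF ts st A_dim E_dim A_lower E_lower A_stair_hat E_stair_hat] by blast

end
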